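(* Let $\mathcal{F}=(f_s:I_s\to[n]\mid s\in S)$ be an $S$-claw in $\Delta$. If $\mathcal{F}$ is compatible and either left active or right active, then $\mathcal{F}$ is cyclically compatible. Moreover, the following are equivalent: (1) $\mathcal{F}$ is cyclically compatible; (2) for every $m\in[n]$ the cyclic rotation $\mathcal{F}^{+m}$ is compatible; (3) there is $m\in[n]$ such that $\mathcal{F}^{+m}$ is left active and compatible; (4) there is $m\in[n]$ such that $\mathcal{F}^{+m}$ is right active and compatible.
   Context: $\Delta$: simplex category of $[n]=\{0<\dots<n\}$, weakly monotone maps. An $S$-claw on $[n]$ is a family $f_s:I_s\to[n]$; it is left (right) active if each $f_s$ preserves minima (maxima). Compatible: (BC1) for each $i\in[n]$ at most one $s$ has $f_s^{-1}\{i\}$ not a singleton; (BC2) for each $0<i\le n$ at most one $s$ has $\{i-1,i\}\not\subseteq f_s(I_s)$. Cyclically compatible: compatible and all but at most one $s$ satisfy $\{0,n\}\subseteq f_s(I_s)$. Cyclic rotation: for $m\in[n]$, let $[n]^{+m}$ be the set $\{0,\dots,n\}$ with the order $n-m+1\prec\dots\prec n\prec0\prec\dots\prec n-m$, and $I_s^{+m}$ the set $I_s$ with the order in which the elements of $f_s^{-1}\{n-m+1,\dots,n\}$ (in their original order) precede those of $f_s^{-1}\{0,\dots,n-m\}$ (in their original order); then $f_s^{+m}:I_s^{+m}\to[n]^{+m}$ (same underlying map) is order preserving, and $\mathcal{F}^{+m}=(f_s^{+m})_{s\in S}$, regarded as a claw in $\Delta$ via the unique order isomorphisms with standard ordinals.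 (This is the rotation induced by the cyclic category $\Lambda$, where $\Delta\cong\Lambda_{/\langle0\rangle}$.) *)

theory Defs
  imports Main
begin

(* An S-claw on [n] in Delta: for each s in S a weakly monotone map
   f s : [k s] = {0..k s} -> [n] = {0..n}.  Only values on {0..k s} matter. *)
definition claw :: "nat \<Rightarrow> 's set \<Rightarrow> ('s \<Rightarrow> nat) \<Rightarrow> ('s \<Rightarrow> nat \<Rightarrow> nat) \<Rightarrow> bool" where
  "claw n S k f \<longleftrightarrow> (\<forall>s\<in>S. (\<forall>i j. i \<le> j \<and> j \<le> k s \<longrightarrow> f s i \<le> f s j) \<and> (\<forall>i\<le>k s. f s i \<le> n))"

definition fib :: "('s \<Rightarrow> nat) \<Rightarrow> ('s \<Rightarrow> nat \<Rightarrow> nat) \<Rightarrow> 's \<Rightarrow> nat \<Rightarrow> nat set" where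
  "fib k f s i = {j. j \<le> k s \<and> f s j = i}"

definition img :: "('s \<Rightarrow> nat) \<Rightarrow> ('s \<Rightarrow> nat \<Rightarrow> nat) \<Rightarrow> 's \<Rightarrow> nat set" where
  "img k f s = f s ` {0..k s}"

definition compatible :: "nat \<Rightarrow> 's set \<Rightarrow> ('s \<Rightarrow> nat) \<Rightarrow> ('s \<Rightarrow> nat \<Rightarrow> nat) \<Rightarrow> bool" where
  "compatible n S k f \<longleftrightarrow>
     (\<forall>i\<le>n. \<forall>s\<in>S. \<forall>t\<in>S.
        \<not> (\<exists>x. fib k f s i = {x}) \<and> \<not> (\<exists>x. fib k f t i = {x}) \<longrightarrow> s = t) \<and>
     (\<forall>i. 0 < i \<and> i \<le> n \<longrightarrow> (\<forall>s\<in>S. \<forall>t\<in>S.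
        \<not> {i - 1, i} \<subseteq> img k f s \<and> \<not> {i - 1, i} \<subseteq> img k f t \<longrightarrow> s = t))"

definition cyc_compatible :: "nat \<Rightarrow> 's set \<Rightarrow> ('s \<Rightarrow> nat) \<Rightarrow> ('s \<Rightarrow> nat \<Rightarrow> nat) \<Rightarrow> bool" where
  "cyc_compatible n S k f \<longleftrightarrow> compatible n S k f \<and>
     (\<forall>s\<in>S. \<forall>t\<in>S. \<not> {0, n} \<subseteq> img k f s \<and> \<not> {0, n} \<subseteq> img k f t \<longrightarrow> s = t)"

definition left_active :: "'s set \<Rightarrow> ('s \<Rightarrow> nat \<Rightarrow> nat) \<Rightarrow> bool" where
  "left_active S f \<longleftrightarrow> (\<forall>s\<in>S. f s 0 = 0)"

definition right_active :: "nat \<Rightarrow> 's set \<Rightarrow> ('s \<Rightarrow> nat) \<Rightarrow> ('s \<Rightarrow> nat \<Rightarrow> nat) \<Rightarrow> bool" where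
  "right_active n S k f \<longleftrightarrow> (\<forall>s\<in>S. f s (k s) = n)"

(* Cyclic rotation F^{+m}, transported to standard ordinals.
   [n]^{+m} -> [n] via i |-> (i + m) mod (n+1).
   I_s^{+m} -> [k s]: with c = |f_s^{-1}{n-m+1..n}| the rotated order on {0..k s}
   starts at k s + 1 - c; the standard position j corresponds to the original
   element (j + k s + 1 - c) mod (k s + 1). *)
definition rot_shift :: "nat \<Rightarrow> nat \<Rightarrow> ('s \<Rightarrow> nat) \<Rightarrow> ('s \<Rightarrow> nat \<Rightarrow> nat) \<Rightarrow> 's \<Rightarrow> nat" where
  "rot_shift n m k f s = card {j. j \<le> k s \<and> n + 1 \<le> f s j + m}"

definition rot :: "nat \<Rightarrow> nat \<Rightarrow> ('s \<Rightarrow> nat) \<Rightarrow> ('s \<Rightarrow> nat \<Rightarrow> nat) \<Rightarrow> 's \<Rightarrow> nat \<Rightarrow> nat" where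
  "rot n m k f s j =
     (f s ((j + (k s + 1 - rot_shift n m k f s)) mod (k s + 1)) + m) mod (n + 1)"

end

theory Submission imports Defs "HOL-Number_Theory.Cong" begin

lemma shift_inj: "inj_on (\<lambda>j. (j + d) mod Suc N) {..N}"
proof (rule inj_onI)
  fix i j assume "i \<in> {..N}" "j \<in> {..N}" "(i + d) mod Suc N = (j + d) mod Suc N"
  then have "[i + d = j + d] (mod Suc N)" by (simp add: cong_def)
  then have "[i = j] (mod Suc N)" by (simp add: cong_add_rcancel_nat)
  then show "i = j" using \<open>i \<in> {..N}\<close> \<open>j \<in> {..N}\<close> by (simp add: cong_def)
qed

lemma shift_img: "(\<lambda>j. (j + d) mod Suc N) ` {..N} = {..N}"
proof (rule card_subset_eq)
  show "finite {..N}" by simp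
  show "(\<lambda>j. (j + d) mod Suc N) ` {..N} \<subseteq> {..N}"
    by (auto simp: less_Suc_eq_le[symmetric])
  show "card ((\<lambda>j. (j + d) mod Suc N) ` {..N}) = card {..N}"
    using card_image[OF shift_inj] by blast
qed

lemma claw_le: "claw n S k f \<Longrightarrow> s \<in> S \<Longrightarrow> j \<le> k s \<Longrightarrow> f s j \<le> n"
  unfolding claw_def by blast
lemma claw_mono: "claw n S k f \<Longrightarrow> s \<in> S \<Longrightarrow> i \<le> j \<Longrightarrow> j \<le> k s \<Longrightarrow> f s i \<le> f s j"
  unfolding claw_def by blast

lemma img_le: "claw n S k f \<Longrightarrow> s \<in> S \<Longrightarrow> img k f s \<subseteq> {..n}"
  unfolding img_def using claw_le by fastforce

lemma img_rot: "img k (rot n m k f) s = (\<lambda>v. (v + m) mod Suc n) ` img k f s"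
proof -
  define d where "d = k s + 1 - rot_shift n m k f s"
  have "img k (rot n m k f) s = (\<lambda>v. (v + m) mod Suc n) ` f s ` (\<lambda>j. (j + d) mod Suc (k s)) ` {..k s}"
    unfolding img_def rot_def d_def by (simp add: image_image atLeast0AtMost)
  also have "\<dots> = (\<lambda>v. (v + m) mod Suc n) ` img k f s"
    unfolding shift_img img_def by (simp add: atLeast0AtMost)
  finally show ?thesis .
qed

lemma img_rot_iff:
  assumes "claw n S k f" "s \<in> S" "a \<le> n"
  shows "((a + m) mod Suc n \<in> img k (rot n m k f) s) \<longleftrightarrow> (a \<in> img k f s)"
  unfolding img_rot
proof (rule inj_on_image_mem_iff[OF shift_inj])
  show "img k f s \<subseteq> {..n}" using img_le[OF assms(1,2)] .
qed (use assms in auto)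

lemma fib_rot_card:
  assumes cl: "claw n S k f" and s: "s \<in> S" and a: "a \<le> n"
  shows "card (fib k (rot n m k f) s ((a + m) mod Suc n)) = card (fib k f s a)"
proof -
  define d where "d = k s + 1 - rot_shift n m k f s"
  define \<sigma> where "\<sigma> = (\<lambda>j. (j + d) mod Suc (k s))"
  have sl: "\<sigma> j \<le> k s" for j unfolding \<sigma>_def using less_Suc_eq_le by auto
  have "fib k (rot n m k f) s ((a + m) mod Suc n) = {j \<in> {..k s}. \<sigma> j \<in> fib k f s a}"
  proof -
    have "((f s (\<sigma> j) + m) mod Suc n = (a + m) mod Suc n) \<longleftrightarrow> f s (\<sigma> j) = a" for j
      using inj_onD[OF shift_inj[of m n], of "f s (\<sigma> j)" a] claw_le[OF cl s sl[of j]] a by auto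
    moreover have "rot n m k f s j = (f s (\<sigma> j) + m) mod Suc n" for j
      unfolding rot_def \<sigma>_def d_def by simp
    ultimately show ?thesis unfolding fib_def using sl by auto
  qed
  moreover have "\<sigma> ` {j \<in> {..k s}. \<sigma> j \<in> fib k f s a} = fib k f s a"
  proof
    show "\<sigma> ` {j \<in> {..k s}. \<sigma> j \<in> fib k f s a} \<subseteq> fib k f s a" by auto
    show "fib k f s a \<subseteq> \<sigma> ` {j \<in> {..k s}. \<sigma> j \<in> fib k f s a}"
    proof
      fix x assume x: "x \<in> fib k f s a"
      then have "x \<in> \<sigma> ` {..k s}" unfolding \<sigma>_def shift_img fib_def by auto
      then obtain j where "j \<le> k s" "x = \<sigma> j" by auto
      then show "x \<in> \<sigma> ` {j \<in> {..k s}. \<sigma> j \<in> fib k f s a}" using x by auto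
    qed
  qed
  moreover have "inj_on \<sigma> {j \<in> {..k s}. \<sigma> j \<in> fib k f s a}"
    unfolding \<sigma>_def by (rule inj_on_subset[OF shift_inj]) auto
  ultimately show ?thesis by (metis card_image)
qed

lemma fib_rot_sing:
  assumes "claw n S k f" "s \<in> S" "a \<le> n"
  shows "(\<exists>x. fib k (rot n m k f) s ((a + m) mod Suc n) = {x}) \<longleftrightarrow> (\<exists>x. fib k f s a = {x})"
  using fib_rot_card[OF assms, of m] by (metis card_1_singleton_iff)

definition BC1 :: "nat \<Rightarrow> 's set \<Rightarrow> ('s \<Rightarrow> nat) \<Rightarrow> ('s \<Rightarrow> nat \<Rightarrow> nat) \<Rightarrow> bool" where
  "BC1 n S k g \<longleftrightarrow> (\<forall>i\<le>n. \<forall>s\<in>S. \<forall>t\<in>S.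
        \<not> (\<exists>x. fib k g s i = {x}) \<and> \<not> (\<exists>x. fib k g t i = {x}) \<longrightarrow> s = t)"

definition CP :: "nat \<Rightarrow> 's set \<Rightarrow> ('s \<Rightarrow> nat) \<Rightarrow> ('s \<Rightarrow> nat \<Rightarrow> nat) \<Rightarrow> nat \<Rightarrow> bool" where
  "CP n S k g a \<longleftrightarrow> (\<forall>s\<in>S. \<forall>t\<in>S.
        \<not> {a, (a + 1) mod Suc n} \<subseteq> img k g s \<and> \<not> {a, (a + 1) mod Suc n} \<subseteq> img k g t \<longrightarrow> s = t)"

lemma compat_iff: "compatible n S k g \<longleftrightarrow> BC1 n S k g \<and> (\<forall>a<n. CP n S k g a)"
proof -
  have "(\<forall>i. 0 < i \<and> i \<le> n \<longrightarrow> (\<forall>s\<in>S. \<forall>t\<in>S.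
        \<not> {i - 1, i} \<subseteq> img k g s \<and> \<not> {i - 1, i} \<subseteq> img k g t \<longrightarrow> s = t))
     \<longleftrightarrow> (\<forall>a<n. CP n S k g a)"
  proof
    assume H: "\<forall>i. 0 < i \<and> i \<le> n \<longrightarrow> (\<forall>s\<in>S. \<forall>t\<in>S.
        \<not> {i - 1, i} \<subseteq> img k g s \<and> \<not> {i - 1, i} \<subseteq> img k g t \<longrightarrow> s = t)"
    show "\<forall>a<n. CP n S k g a"
    proof (intro allI impI)
      fix a assume "a < n"
      then have e: "(a + 1) mod Suc n = Suc a" "Suc a - 1 = a" by auto
      have "\<forall>s\<in>S. \<forall>t\<in>S. \<not> {Suc a - 1, Suc a} \<subseteq> img k g s \<and> \<not> {Suc a - 1, Suc a} \<subseteq> img k g t \<longrightarrow> s = t"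
        using H[rule_format, of "Suc a"] \<open>a < n\<close> by simp
      then show "CP n S k g a" unfolding CP_def e by simp
    qed
  next
    assume H: "\<forall>a<n. CP n S k g a"
    show "\<forall>i. 0 < i \<and> i \<le> n \<longrightarrow> (\<forall>s\<in>S. \<forall>t\<in>S.
        \<not> {i - 1, i} \<subseteq> img k g s \<and> \<not> {i - 1, i} \<subseteq> img k g t \<longrightarrow> s = t)"
    proof (intro allI impI)
      fix i assume i: "0 < i \<and> i \<le> n"
      then have e: "(i - 1 + 1) mod Suc n = i" "i - 1 < n" by auto
      have "CP n S k g (i - 1)" using H e(2) by blast
      then show "\<forall>s\<in>S. \<forall>t\<in>S.
        \<not> {i - 1, i} \<subseteq> img k g s \<and> \<not> {i - 1, i} \<subseteq> img k g t \<longrightarrow> s = t"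
        unfolding CP_def e(1) .
    qed
  qed
  then show ?thesis unfolding compatible_def BC1_def by (simp only:)
qed

lemma cyc_iff: "cyc_compatible n S k g \<longleftrightarrow> BC1 n S k g \<and> (\<forall>a\<le>n. CP n S k g a)"
proof -
  have "CP n S k g n \<longleftrightarrow> (\<forall>s\<in>S. \<forall>t\<in>S. \<not> {0, n} \<subseteq> img k g s \<and> \<not> {0, n} \<subseteq> img k g t \<longrightarrow> s = t)"
    unfolding CP_def by (simp add: insert_commute)
  moreover have "(\<forall>a\<le>n. CP n S k g a) \<longleftrightarrow> (\<forall>a<n. CP n S k g a) \<and> CP n S k g n"
    by (auto simp: le_less)
  ultimately show ?thesis unfolding cyc_compatible_def compat_iff by simp
qed

lemma rho_nx: "((a + 1) mod Suc n + m) mod Suc n = ((a + m) mod Suc n + 1) mod Suc n"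
  by (simp add: mod_simps ac_simps)

lemma CP_rot:
  assumes cl: "claw n S k f" and a: "a \<le> n"
  shows "CP n S k (rot n m k f) ((a + m) mod Suc n) \<longleftrightarrow> CP n S k f a"
proof -
  have le: "(a + 1) mod Suc n \<le> n" using less_Suc_eq_le by auto
  have "{(a + m) mod Suc n, ((a + m) mod Suc n + 1) mod Suc n} \<subseteq> img k (rot n m k f) s
     \<longleftrightarrow> {a, (a + 1) mod Suc n} \<subseteq> img k f s" if s: "s \<in> S" for s
  proof -
    have i1: "((a + m) mod Suc n \<in> img k (rot n m k f) s) \<longleftrightarrow> (a \<in> img k f s)"
      by (rule img_rot_iff[OF cl s a])
    have i2: "(((a + 1) mod Suc n + m) mod Suc n \<in> img k (rot n m k f) s) \<longleftrightarrow> ((a + 1) mod Suc n \<in> img k f s)"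
      by (rule img_rot_iff[OF cl s le])
    show ?thesis unfolding insert_subset rho_nx[symmetric] i1 i2 by simp
  qed
  then show ?thesis unfolding CP_def by auto
qed

lemma rho_surj: "i \<le> n \<Longrightarrow> \<exists>b\<le>n. (b + m) mod Suc n = i"
proof -
  assume "i \<le> n"
  then have "i \<in> (\<lambda>j. (j + m) mod Suc n) ` {..n}" unfolding shift_img by simp
  then obtain b where "b \<in> {..n}" "i = (b + m) mod Suc n" by (rule imageE)
  then show ?thesis by auto
qed

lemma rho_le: "(b + m) mod Suc n \<le> n"
  using less_Suc_eq_le by auto

lemma BC1_rot:
  assumes cl: "claw n S k f"
  shows "BC1 n S k (rot n m k f) \<longleftrightarrow> BC1 n S k f"
proof
  assume H: "BC1 n S k (rot n m k f)"
  show "BC1 n S k f" unfolding BC1_def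
  proof (intro allI impI ballI)
    fix i s t assume "i \<le> n" "s \<in> S" "t \<in> S"
      "\<not> (\<exists>x. fib k f s i = {x}) \<and> \<not> (\<exists>x. fib k f t i = {x})"
    then have "\<not> (\<exists>x. fib k (rot n m k f) s ((i + m) mod Suc n) = {x})"
      "\<not> (\<exists>x. fib k (rot n m k f) t ((i + m) mod Suc n) = {x})"
      using fib_rot_sing[OF cl, of s i m] fib_rot_sing[OF cl, of t i m] by auto
    then show "s = t" using H rho_le[of i m n] \<open>s \<in> S\<close> \<open>t \<in> S\<close>
      unfolding BC1_def by blast
  qed
next
  assume H: "BC1 n S k f"
  show "BC1 n S k (rot n m k f)" unfolding BC1_def
  proof (intro allI impI ballI)
    fix i s t assume i: "i \<le> n" and st: "s \<in> S" "t \<in> S"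
      "\<not> (\<exists>x. fib k (rot n m k f) s i = {x}) \<and> \<not> (\<exists>x. fib k (rot n m k f) t i = {x})"
    obtain b where b: "b \<le> n" "(b + m) mod Suc n = i" using rho_surj[OF i] by blast
    have "\<not> (\<exists>x. fib k f s b = {x})" "\<not> (\<exists>x. fib k f t b = {x})"
      using st b fib_rot_sing[OF cl st(1) b(1), of m] fib_rot_sing[OF cl st(2) b(1), of m] by auto
    then show "s = t" using H st(1,2) b(1)
      unfolding BC1_def by blast
  qed
qed

lemma compat_rot_of_cyc:
  assumes cl: "claw n S k f" and c: "cyc_compatible n S k f"
  shows "compatible n S k (rot n m k f)"
proof -
  have cc: "BC1 n S k f" "\<forall>a\<le>n. CP n S k f a" using c unfolding cyc_iff by simp_all
  have "BC1 n S k (rot n m k f)" using cc(1) BC1_rot[OF cl] by simp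
  moreover have "CP n S k (rot n m k f) a" if alt: "a < n" for a
  proof -
    obtain b where b: "b \<le> n" "(b + m) mod Suc n = a" using rho_surj[of a n m] less_imp_le[OF alt] by blast
    have "CP n S k f b" using cc(2) b(1) by simp
    then show ?thesis using CP_rot[OF cl b(1), of m] b(2) by simp
  qed
  ultimately show ?thesis unfolding compat_iff by simp
qed

lemma cyc_of_cyc_rot:
  assumes cl: "claw n S k f" and c: "cyc_compatible n S k (rot n m k f)"
  shows "cyc_compatible n S k f"
proof -
  have cc: "BC1 n S k (rot n m k f)" "\<forall>a\<le>n. CP n S k (rot n m k f) a" using c unfolding cyc_iff by simp_all
  have "BC1 n S k f" using cc(1) BC1_rot[OF cl] by simp
  moreover have "CP n S k f a" if a: "a \<le> n" for a
  proof -
    have "CP n S k (rot n m k f) ((a + m) mod Suc n)" using cc(2) rho_le[of a m n] by simp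
    then show ?thesis using CP_rot[OF cl a, of m] by simp
  qed
  ultimately show ?thesis unfolding cyc_iff by simp
qed

lemma claim1:
  assumes c: "compatible n S k g" and h: "(\<forall>s\<in>S. 0 \<in> img k g s) \<or> (\<forall>s\<in>S. n \<in> img k g s)"
  shows "cyc_compatible n S k g"
  unfolding cyc_compatible_def
proof (intro conjI c ballI impI)
  fix s t assume st: "s \<in> S" "t \<in> S" "\<not> {0, n} \<subseteq> img k g s \<and> \<not> {0, n} \<subseteq> img k g t"
  have cp: "\<forall>a<n. CP n S k g a" using c unfolding compat_iff by simp
  show "s = t"
  proof (cases "n = 0")
    case True then show ?thesis using h st by auto
  next
    case False
    show ?thesis using h
    proof
      assume "\<forall>s\<in>S. 0 \<in> img k g s"
      then have "n \<notin> img k g s" "n \<notin> img k g t" using st by auto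
      moreover have "CP n S k g (n - 1)" using cp False by simp
      moreover have "(n - 1 + 1) mod Suc n = n" using False by simp
      ultimately show ?thesis unfolding CP_def using st(1,2) by auto
    next
      assume "\<forall>s\<in>S. n \<in> img k g s"
      then have "0 \<notin> img k g s" "0 \<notin> img k g t" using st by auto
      moreover have "CP n S k g 0" using cp False by simp
      ultimately show ?thesis unfolding CP_def using st(1,2) by auto
    qed
  qed
qed

lemma common_value:
  assumes cl: "claw n S k f" and c: "compatible n S k f"
  shows "\<exists>v\<le>n. \<forall>s\<in>S. v \<in> img k f s"
proof (rule ccontr)
  assume "\<not> ?thesis"
  then have H: "\<forall>v\<le>n. \<exists>s\<in>S. v \<notin> img k f s" by auto
  then obtain s0 where s0: "s0 \<in> S" "0 \<notin> img k f s0" by auto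
  have "v \<notin> img k f s0" if "v \<le> n" for v
    using that
  proof (induction v)
    case 0 then show ?case using s0 by simp
  next
    case (Suc v)
    obtain t where t: "t \<in> S" "Suc v \<notin> img k f t" using H Suc.prems by blast
    have "v \<notin> img k f s0" using Suc by simp
    have "\<not> {v, Suc v} \<subseteq> img k f s0" "\<not> {v, Suc v} \<subseteq> img k f t"
      using \<open>v \<notin> img k f s0\<close> t by auto
    moreover have "CP n S k f v" using c Suc.prems unfolding compat_iff by simp
    moreover have "(v + 1) mod Suc n = Suc v" using Suc.prems by simp
    ultimately have "s0 = t" using s0(1) t(1) unfolding CP_def by auto
    then show ?case using t by simp
  qed
  moreover have "f s0 0 \<in> img k f s0" "f s0 0 \<le> n" using claw_le[OF cl s0(1)] unfolding img_def by auto
  ultimately show False by blast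
qed

lemma left_choice:
  assumes cl: "claw n S k f" and v: "v \<le> n" and hv: "\<forall>s\<in>S. v \<in> img k f s"
  shows "\<exists>m\<le>n. left_active S (rot n m k f)"
proof (cases "v = 0")
  case True
  have "rot n 0 k f s 0 = 0" if s: "s \<in> S" for s
  proof -
    have "{j. j \<le> k s \<and> n + 1 \<le> f s j + 0} = {}"
      using claw_le[OF cl s] by force
    then have "rot_shift n 0 k f s = 0" unfolding rot_shift_def by simp
    then have r: "rot n 0 k f s 0 = f s 0 mod Suc n" unfolding rot_def by simp
    obtain j0 where j0: "j0 \<le> k s" "f s j0 = 0" using hv s True unfolding img_def by auto
    have "f s 0 \<le> f s j0" using claw_mono[OF cl s _ j0(1)] by simp
    then show ?thesis using r j0 by simp
  qed
  then show ?thesis unfolding left_active_def by (intro exI[of _ 0]) simp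
next
  case False
  define m where "m = Suc n - v"
  have mn: "m \<le> n" using False m_def by simp
  have "rot n m k f s 0 = 0" if s: "s \<in> S" for s
  proof -
    obtain j0 where j0: "j0 \<le> k s" "f s j0 = v" using hv s unfolding img_def by auto
    define p where "p = (LEAST j. v \<le> f s j)"
    have pj0: "p \<le> j0" unfolding p_def using Least_le[of "\<lambda>j. v \<le> f s j" j0] j0 by simp
    have fp1: "v \<le> f s p" unfolding p_def using LeastI[of "\<lambda>j. v \<le> f s j" j0] j0 by simp
    have fp2: "f s p \<le> v" using claw_mono[OF cl s pj0 j0(1)] j0 by simp
    have A: "p \<le> j" if "j \<le> k s" "n + 1 \<le> f s j + m" for j
    proof -
      have "v \<le> f s j" using that m_def v by simp
      then show "p \<le> j" unfolding p_def using Least_le[of "\<lambda>j. v \<le> f s j" j] by simp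
    qed
    have B: "n + 1 \<le> f s j + m" if "p \<le> j" "j \<le> k s" for j
      using that claw_mono[OF cl s, of p j] fp1 m_def v by simp
    have "{j. j \<le> k s \<and> n + 1 \<le> f s j + m} = {p..k s}"
      using A B by auto
    then have "rot_shift n m k f s = Suc (k s) - p" unfolding rot_shift_def by simp
    moreover have "p \<le> k s" using pj0 j0 by simp
    ultimately have "rot n m k f s 0 = (f s p + m) mod Suc n" unfolding rot_def by simp
    also have "\<dots> = 0" using fp1 fp2 m_def v by simp
    finally show ?thesis .
  qed
  then show ?thesis unfolding left_active_def using mn by blast
qed

lemma right_choice:
  assumes cl: "claw n S k f" and v: "v \<le> n" and hv: "\<forall>s\<in>S. v \<in> img k f s"
  shows "\<exists>m\<le>n. right_active n S k (rot n m k f)"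
proof -
  define m where "m = n - v"
  have mn: "m \<le> n" using m_def by simp
  have "rot n m k f s (k s) = n" if s: "s \<in> S" for s
  proof -
    obtain j0 where j0: "j0 \<le> k s" "f s j0 = v" using hv s unfolding img_def by auto
    define q where "q = (LEAST j. k s < j \<or> v < f s j)"
    have q1: "k s < q \<or> v < f s q" unfolding q_def
      using LeastI[of "\<lambda>j. k s < j \<or> v < f s j" "Suc (k s)"] by simp
    have q2: "q \<le> Suc (k s)" unfolding q_def
      using Least_le[of "\<lambda>j. k s < j \<or> v < f s j" "Suc (k s)"] by simp
    have q3: "j0 < q"
    proof (rule ccontr)
      assume "\<not> j0 < q"
      then have "q \<le> j0" by simp
      then show False using q1 claw_mono[OF cl s \<open>q \<le> j0\<close> j0(1)] j0 by simp
    qed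
    have A: "q \<le> j" if "j \<le> k s" "n + 1 \<le> f s j + m" for j
    proof -
      have "v < f s j" using that m_def v by simp
      then show "q \<le> j" unfolding q_def
        using Least_le[of "\<lambda>j. k s < j \<or> v < f s j" j] by simp
    qed
    have B: "n + 1 \<le> f s j + m" if "q \<le> j" "j \<le> k s" for j
      using that claw_mono[OF cl s, of q j] q1 m_def v by simp
    have "{j. j \<le> k s \<and> n + 1 \<le> f s j + m} = {q..k s}"
      using A B by auto
    then have "rot_shift n m k f s = Suc (k s) - q" unfolding rot_shift_def by simp
    then have sh: "k s + 1 - rot_shift n m k f s = q" using q2 by simp
    have e: "k s + q = (q - 1) + Suc (k s)" using q3 by simp
    have "(k s + q) mod Suc (k s) = (q - 1) mod Suc (k s)" unfolding e by (rule mod_add_self2)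
    also have "\<dots> = q - 1" using q2 q3 by simp
    finally have md: "(k s + q) mod Suc (k s) = q - 1" .
    have r: "rot n m k f s (k s) = (f s (q - 1) + m) mod Suc n"
      unfolding rot_def sh using md by simp
    have "q - 1 < q" using q3 by simp
    then have "\<not> (k s < q - 1 \<or> v < f s (q - 1))"
      using not_less_Least[of "q - 1" "\<lambda>j. k s < j \<or> v < f s j"] unfolding q_def by blast
    then have "f s (q - 1) \<le> v" by simp
    moreover have "v \<le> f s (q - 1)" using claw_mono[OF cl s, of j0 "q - 1"] j0 q2 q3 by simp
    ultimately show ?thesis using r m_def v by simp
  qed
  then show ?thesis unfolding right_active_def using mn by blast
qed

theorem lemma4p2p6:
  fixes n :: nat and S :: "'s set" and k :: "'s \<Rightarrow> nat" and f :: "'s \<Rightarrow> nat \<Rightarrow> nat"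
  assumes "claw n S k f"
  shows "(compatible n S k f \<and> (left_active S f \<or> right_active n S k f)
            \<longrightarrow> cyc_compatible n S k f)
       \<and> (cyc_compatible n S k f \<longleftrightarrow> (\<forall>m\<le>n. compatible n S k (rot n m k f)))
       \<and> (cyc_compatible n S k f \<longleftrightarrow>
            (\<exists>m\<le>n. left_active S (rot n m k f) \<and> compatible n S k (rot n m k f)))
       \<and> (cyc_compatible n S k f \<longleftrightarrow>
            (\<exists>m\<le>n. right_active n S k (rot n m k f) \<and> compatible n S k (rot n m k f)))"
proof -
  note cl = assms
  have la: "\<forall>s\<in>S. 0 \<in> img k g s" if "left_active S g" for g :: "'s \<Rightarrow> nat \<Rightarrow> nat"
    using that unfolding left_active_def img_def by force
  have ra: "\<forall>s\<in>S. n \<in> img k g s" if "right_active n S k g" for g :: "'s \<Rightarrow> nat \<Rightarrow> nat"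
    using that unfolding right_active_def img_def by force
  have P1: "compatible n S k f \<and> (left_active S f \<or> right_active n S k f) \<longrightarrow> cyc_compatible n S k f"
    using claim1 la ra by blast
  have P2: "cyc_compatible n S k f \<longleftrightarrow> (\<forall>m\<le>n. compatible n S k (rot n m k f))"
  proof
    assume "cyc_compatible n S k f"
    then show "\<forall>m\<le>n. compatible n S k (rot n m k f)" using compat_rot_of_cyc[OF cl] by blast
  next
    assume H: "\<forall>m\<le>n. compatible n S k (rot n m k f)"
    then have c0: "compatible n S k (rot n 0 k f)" by simp
    then have b: "BC1 n S k f" using compat_iff BC1_rot[OF cl] by blast
    have lt: "CP n S k f a" if "a < n" for a
    proof -
      have "CP n S k (rot n 0 k f) a" using c0 that unfolding compat_iff by simp
      moreover have "(a + 0) mod Suc n = a" using that by simp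
      ultimately have "CP n S k (rot n 0 k f) ((a + 0) mod Suc n)" by simp
      then show ?thesis using CP_rot[OF cl, of a 0] that by simp
    qed
    have "CP n S k f n"
    proof (cases "n = 0")
      case True
      have "0 \<in> img k f s" if "s \<in> S" for s
        using claw_le[OF cl that, of 0] True unfolding img_def by force
      then show ?thesis unfolding CP_def using True by simp
    next
      case False
      then have "compatible n S k (rot n 1 k f)" using H by simp
      then have "CP n S k (rot n 1 k f) 0" using False compat_iff by blast
      moreover have "(n + 1) mod Suc n = 0" by simp
      ultimately show ?thesis using CP_rot[OF cl, of n 1] by simp
    qed
    then have "\<forall>a\<le>n. CP n S k f a" using lt by (auto simp: le_less)
    then show "cyc_compatible n S k f" using b cyc_iff by blast
  qed
  have P3: "cyc_compatible n S k f \<longleftrightarrow>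
            (\<exists>m\<le>n. left_active S (rot n m k f) \<and> compatible n S k (rot n m k f))"
  proof
    assume c: "cyc_compatible n S k f"
    then obtain v where "v \<le> n" "\<forall>s\<in>S. v \<in> img k f s"
      using common_value[OF cl] cyc_compatible_def by blast
    then obtain m where "m \<le> n" "left_active S (rot n m k f)" using left_choice[OF cl] by blast
    then show "\<exists>m\<le>n. left_active S (rot n m k f) \<and> compatible n S k (rot n m k f)"
      using compat_rot_of_cyc[OF cl c] by blast
  next
    assume "\<exists>m\<le>n. left_active S (rot n m k f) \<and> compatible n S k (rot n m k f)"
    then obtain m where "left_active S (rot n m k f)" "compatible n S k (rot n m k f)" by blast
    then have "cyc_compatible n S k (rot n m k f)" using claim1 la by blast
    then show "cyc_compatible n S k f" by (rule cyc_of_cyc_rot[OF cl])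
  qed
  have P4: "cyc_compatible n S k f \<longleftrightarrow>
            (\<exists>m\<le>n. right_active n S k (rot n m k f) \<and> compatible n S k (rot n m k f))"
  proof
    assume c: "cyc_compatible n S k f"
    then obtain v where "v \<le> n" "\<forall>s\<in>S. v \<in> img k f s"
      using common_value[OF cl] cyc_compatible_def by blast
    then obtain m where "m \<le> n" "right_active n S k (rot n m k f)" using right_choice[OF cl] by blast
    then show "\<exists>m\<le>n. right_active n S k (rot n m k f) \<and> compatible n S k (rot n m k f)"
      using compat_rot_of_cyc[OF cl c] by blast
  next
    assume "\<exists>m\<le>n. right_active n S k (rot n m k f) \<and> compatible n S k (rot n m k f)"
    then obtain m where "right_active n S k (rot n m k f)" "compatible n S k (rot n m k f)" by blast
    then have "cyc_compatible n S k (rot n m k f)" using claim1 ra by blast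
    then show "cyc_compatible n S k f" by (rule cyc_of_cyc_rot[OF cl])
  qed
  show ?thesis using P1 P2 P3 P4 by blast
qed

end
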